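(* Let $\sigma$ be a linear extension of $\preceq$ and let $(r,k)$ be a bounding state satisfying the Active-item and Partial-order invariants such that $(r,k)$ bounds $\sigma$. Let $i\in\{1,\dots,n-1\}$ and $c\in\{0,1\}$, and define $c'=1-c$ if $\sigma(i)=r(i+1)$ and $c'=c$ otherwise. Then $\mathrm{AT}(\sigma,i,c')$ is bounded by $\mathrm{BC}((r,k),i,c)$.
   Context: Let $\preceq$ be a partial order on $S=\{1,\dots,n\}$, $n\ge2$, such that the identity permutation is a linear extension ($a\preceq b$ implies $a\le b$). A permutation is written $\sigma=(\sigma(1),\dots,\sigma(n))$ with $\sigma(p)$ the item in position $p$; it is a linear extension if for all $p<q$, $\neg(\sigma(q)\preceq\sigma(p))$. $\mathrm{AT}(\sigma,i,c)$: if $c=1$ and $\neg(\sigma(i)\preceq\sigma(i+1))$, swap the entries in positions $i,i+1$; return the result. Introduce a symbol $*$ and declare every comparison $x\preceq y$ in which $x$ or $y$ is $*$ to be false. A bounding state is a pair $(r,k)$ with $r\in(\{*\}\cup S)^n$, $k\in\{1,\dots,n\}$, whose non-$*$ entries are exactly $1,\dots,k$ (active items), each appearing once. Active-item invariant: every $a\le k$ appears in $r$. Partial-order invariant: if $r(p)=a\le k$, $r(q)=b\le k$, $a\neq b$, $a\preceq b$, then $p<q$. $(r,k)$ bounds $\sigma$ if for all $a\le k$ and all positions $p,q$: $\sigma(p)=a$ and $r(q)=a$ imply $p\le q$. $\mathrm{BC}((r,k),i,c)$: (1) if $c=1$ and $\neg(r(i)\preceq r(i+1))$, swap $r(i),r(i+1)$;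 (2) if now $r(n)=*$, set $r(n)\leftarrow k+1$, $k\leftarrow k+1$; (3) return $(r,k)$. *)

theory Defs
  imports Main
begin

text \<open>A permutation is a function
  sigma :: nat => nat, sigma p = item at position p. A bounding-state vector r
  maps positions to nat option, where None plays the role of the symbol *.\<close>

definition partial_order_ext :: "nat \<Rightarrow> (nat \<Rightarrow> nat \<Rightarrow> bool) \<Rightarrow> bool" where
  "partial_order_ext n le \<longleftrightarrow>
     (\<forall>a\<in>{1..n}. le a a) \<and>
     (\<forall>a\<in>{1..n}. \<forall>b\<in>{1..n}. le a b \<and> le b a \<longrightarrow> a = b) \<and>
     (\<forall>a\<in>{1..n}. \<forall>b\<in>{1..n}. \<forall>c\<in>{1..n}. le a b \<and> le b c \<longrightarrow> le a c) \<and>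
     (\<forall>a\<in>{1..n}. \<forall>b\<in>{1..n}. le a b \<longrightarrow> a \<le> b)"

definition linear_extension :: "nat \<Rightarrow> (nat \<Rightarrow> nat \<Rightarrow> bool) \<Rightarrow> (nat \<Rightarrow> nat) \<Rightarrow> bool" where
  "linear_extension n le \<sigma> \<longleftrightarrow> bij_betw \<sigma> {1..n} {1..n} \<and>
     (\<forall>p\<in>{1..n}. \<forall>q\<in>{1..n}. p < q \<longrightarrow> \<not> le (\<sigma> q) (\<sigma> p))"

fun leo :: "(nat \<Rightarrow> nat \<Rightarrow> bool) \<Rightarrow> nat option \<Rightarrow> nat option \<Rightarrow> bool" where
  "leo le (Some x) (Some y) = le x y"
| "leo le _ _ = False"

definition swap_pos :: "('a \<Rightarrow> 'b) \<Rightarrow> 'a \<Rightarrow> 'a \<Rightarrow> 'a \<Rightarrow> 'b" where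
  "swap_pos f i j = f(i := f j, j := f i)"

definition AT :: "(nat \<Rightarrow> nat \<Rightarrow> bool) \<Rightarrow> (nat \<Rightarrow> nat) \<Rightarrow> nat \<Rightarrow> nat \<Rightarrow> (nat \<Rightarrow> nat)" where
  "AT le \<sigma> i c = (if c = 1 \<and> \<not> le (\<sigma> i) (\<sigma> (i+1)) then swap_pos \<sigma> i (i+1) else \<sigma>)"

definition bounding_state :: "nat \<Rightarrow> (nat \<Rightarrow> nat option) \<Rightarrow> nat \<Rightarrow> bool" where
  "bounding_state n r k \<longleftrightarrow> 1 \<le> k \<and> k \<le> n \<and>
     (\<forall>p\<in>{1..n}. \<forall>a. r p = Some a \<longrightarrow> a \<in> {1..k}) \<and>
     (\<forall>a\<in>{1..k}. \<forall>p\<in>{1..n}. \<forall>q\<in>{1..n}. r p = Some a \<and> r q = Some a \<longrightarrow> p = q)"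

definition active_item_inv :: "nat \<Rightarrow> (nat \<Rightarrow> nat option) \<Rightarrow> nat \<Rightarrow> bool" where
  "active_item_inv n r k \<longleftrightarrow> (\<forall>a\<in>{1..k}. \<exists>p\<in>{1..n}. r p = Some a)"

definition partial_order_inv :: "nat \<Rightarrow> (nat \<Rightarrow> nat \<Rightarrow> bool) \<Rightarrow> (nat \<Rightarrow> nat option) \<Rightarrow> nat \<Rightarrow> bool" where
  "partial_order_inv n le r k \<longleftrightarrow>
     (\<forall>p\<in>{1..n}. \<forall>q\<in>{1..n}. \<forall>a\<in>{1..k}. \<forall>b\<in>{1..k}.
        r p = Some a \<and> r q = Some b \<and> a \<noteq> b \<and> le a b \<longrightarrow> p < q)"

definition bounds :: "nat \<Rightarrow> (nat \<Rightarrow> nat option) \<times> nat \<Rightarrow> (nat \<Rightarrow> nat) \<Rightarrow> bool" where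
  "bounds n rk \<sigma> \<longleftrightarrow> (\<forall>a\<in>{1..snd rk}. \<forall>p\<in>{1..n}. \<forall>q\<in>{1..n}.
       \<sigma> p = a \<and> fst rk q = Some a \<longrightarrow> p \<le> q)"

definition BC :: "nat \<Rightarrow> (nat \<Rightarrow> nat \<Rightarrow> bool) \<Rightarrow> (nat \<Rightarrow> nat option) \<times> nat \<Rightarrow> nat \<Rightarrow> nat
                   \<Rightarrow> (nat \<Rightarrow> nat option) \<times> nat" where
  "BC n le rk i c =
     (let r = fst rk; k = snd rk;
          r1 = (if c = 1 \<and> \<not> leo le (r i) (r (i+1)) then swap_pos r i (i+1) else r)
      in if r1 n = None then (r1(n := Some (k+1)), k+1) else (r1, k))"

end

theory Submission
  imports Defs
begin

theorem theorem2:
  fixes n :: nat and le :: "nat \<Rightarrow> nat \<Rightarrow> bool" and \<sigma> :: "nat \<Rightarrow> nat"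
    and r :: "nat \<Rightarrow> nat option" and k i c :: nat
  assumes "n \<ge> 2"
    and "partial_order_ext n le"
    and "linear_extension n le \<sigma>"
    and "bounding_state n r k"
    and "active_item_inv n r k"
    and "partial_order_inv n le r k"
    and "bounds n (r, k) \<sigma>"
    and "i \<in> {1..n-1}"
    and "c \<in> {0, 1}"
  shows "bounds n (BC n le (r, k) i c)
           (AT le \<sigma> i (if r (i+1) = Some (\<sigma> i) then 1 - c else c))"
proof -
  have i1: "i \<in> {1..n}" "i+1 \<in> {1..n}" using assms(8) assms(1) by auto
  have inj: "inj_on \<sigma> {1..n}" using assms(3) unfolding linear_extension_def bij_betw_def by auto
  have srng: "\<And>p. p \<in> {1..n} \<Longrightarrow> \<sigma> p \<in> {1..n}"
    using assms(3) unfolding linear_extension_def bij_betw_def by auto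
  have ssurj: "\<And>a. a \<in> {1..n} \<Longrightarrow> \<exists>p\<in>{1..n}. \<sigma> p = a"
    using assms(3) unfolding linear_extension_def bij_betw_def by (metis imageE)
  have lin: "\<And>p q. p\<in>{1..n} \<Longrightarrow> q\<in>{1..n} \<Longrightarrow> p<q \<Longrightarrow> \<not> le (\<sigma> q) (\<sigma> p)"
    using assms(3) unfolding linear_extension_def by auto
  have lemono: "\<And>x y. x\<in>{1..n} \<Longrightarrow> y\<in>{1..n} \<Longrightarrow> le x y \<Longrightarrow> x \<le> y"
  proof -
    have "\<forall>a\<in>{1..n}. \<forall>b\<in>{1..n}. le a b \<longrightarrow> a \<le> b"
      using assms(2) unfolding partial_order_ext_def by (elim conjE)
    then show "\<And>x y. x\<in>{1..n} \<Longrightarrow> y\<in>{1..n} \<Longrightarrow> le x y \<Longrightarrow> x \<le> y" by blast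
  qed
  have bsall: "1 \<le> k \<and> k \<le> n \<and> (\<forall>p\<in>{1..n}. \<forall>a. r p = Some a \<longrightarrow> a \<in> {1..k}) \<and>
     (\<forall>a\<in>{1..k}. \<forall>p\<in>{1..n}. \<forall>q\<in>{1..n}. r p = Some a \<and> r q = Some a \<longrightarrow> p = q)"
    using assms(4) unfolding bounding_state_def .
  have bs1: "1 \<le> k" using bsall by (elim conjE)
  have bs2: "k \<le> n" using bsall by (elim conjE)
  have bs3: "\<forall>p\<in>{1..n}. \<forall>a. r p = Some a \<longrightarrow> a \<in> {1..k}" using bsall by (elim conjE)
  have bs4: "\<forall>a\<in>{1..k}. \<forall>p\<in>{1..n}. \<forall>q\<in>{1..n}. r p = Some a \<and> r q = Some a \<longrightarrow> p = q"
    using bsall by (elim conjE)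
  note bs = bs1 bs2 bs3 bs4
  have kn: "k \<le> n" "1 \<le> k" using bs1 bs2 by simp_all
  have rrng: "\<And>p a. p\<in>{1..n} \<Longrightarrow> r p = Some a \<Longrightarrow> a\<in>{1..k}"
    using bs(3) by blast
  have runiq: "\<And>a p q. p\<in>{1..n} \<Longrightarrow> q\<in>{1..n} \<Longrightarrow> r p = Some a \<Longrightarrow> r q = Some a \<Longrightarrow> p = q"
  proof -
    fix a p q assume h: "p\<in>{1..n}" "q\<in>{1..n}" "r p = Some a" "r q = Some a"
    have "a \<in> {1..k}" using rrng h by blast
    then show "p = q" using bs(4) h by blast
  qed
  have ract: "\<And>a. a\<in>{1..k} \<Longrightarrow> \<exists>p\<in>{1..n}. r p = Some a"
    using assms(5) unfolding active_item_inv_def by blast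
  have poi: "\<And>p q a b. p\<in>{1..n} \<Longrightarrow> q\<in>{1..n} \<Longrightarrow> r p = Some a \<Longrightarrow> r q = Some b \<Longrightarrow> a \<noteq> b \<Longrightarrow> le a b \<Longrightarrow> p < q"
  proof -
    fix p q a b assume h: "p\<in>{1..n}" "q\<in>{1..n}" "r p = Some a" "r q = Some b" "a \<noteq> b" "le a b"
    have ab: "a \<in> {1..k}" "b \<in> {1..k}" using rrng h(1-4) by blast+
    have "\<forall>p\<in>{1..n}. \<forall>q\<in>{1..n}. \<forall>a\<in>{1..k}. \<forall>b\<in>{1..k}.
        r p = Some a \<and> r q = Some b \<and> a \<noteq> b \<and> le a b \<longrightarrow> p < q"
      using assms(6) unfolding partial_order_inv_def .
    then show "p < q" using h ab by blast
  qed
  have bnd: "\<And>a p q. p\<in>{1..n} \<Longrightarrow> q\<in>{1..n} \<Longrightarrow> \<sigma> p = a \<Longrightarrow> r q = Some a \<Longrightarrow> p \<le> q"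
  proof -
    fix a p q assume h: "p\<in>{1..n}" "q\<in>{1..n}" "\<sigma> p = a" "r q = Some a"
    have ab: "a \<in> {1..snd (r,k)}" using rrng[OF h(2) h(4)] by (simp only: snd_conv)
    have "\<forall>a\<in>{1..snd (r,k)}. \<forall>p\<in>{1..n}. \<forall>q\<in>{1..n}.
       \<sigma> p = a \<and> fst (r,k) q = Some a \<longrightarrow> p \<le> q"
      using assms(7) unfolding bounds_def .
    then show "p \<le> q" using h ab unfolding fst_conv by blast
  qed
  have claimA: "le (\<sigma> i) (\<sigma> (i+1))" if "r i = Some (\<sigma> i)" "r (i+1) = Some b" "le (\<sigma> i) b" for b
  proof -
    have b: "b \<in> {1..n}" using rrng[OF i1(2) that(2)] kn by auto
    obtain pb where pb: "pb \<in> {1..n}" "\<sigma> pb = b" using ssurj[OF b] by blast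
    have "pb \<le> i+1" using bnd[OF pb(1) i1(2) pb(2) that(2)] .
    moreover have "b \<noteq> \<sigma> i" using runiq[OF i1(1) i1(2) that(1)] that(2) by auto
    hence "pb \<noteq> i" using pb by auto
    ultimately consider "pb = i+1" | "pb < i" by linarith
    then show ?thesis
    proof cases
      case 1 then show ?thesis using pb that by simp
    next
      case 2 then show ?thesis using lin[OF pb(1) i1(1)] pb that by simp
    qed
  qed
  have claimB: "r i = Some (\<sigma> i)" if "r (i+1) = Some a" "\<sigma> (i+1) = a" "le (\<sigma> i) a" for a
  proof -
    have a: "a \<in> {1..k}" using rrng[OF i1(2) that(1)] .
    have d: "\<sigma> i \<in> {1..n}" using srng[OF i1(1)] .
    have ne: "\<sigma> i \<noteq> a"
    proof
      assume "\<sigma> i = a"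
      then have "\<sigma> i = \<sigma> (i+1)" using that(2) by simp
      then have "i = i+1" using inj_onD[OF inj _ i1(1) i1(2)] by blast
      then show False by simp
    qed
    have an: "a \<in> {1..n}" using a kn by simp
    have "\<sigma> i \<le> a" using lemono[OF d an that(3)] .
    hence dk: "\<sigma> i \<in> {1..k}" using a d by auto
    obtain qd where qd: "qd \<in> {1..n}" "r qd = Some (\<sigma> i)" using ract[OF dk] by blast
    have "i \<le> qd" using bnd[OF i1(1) qd(1) refl qd(2)] .
    moreover have "qd \<noteq> i+1" using qd that ne by auto
    moreover have "qd < i+1" using poi[OF qd(1) i1(2) qd(2) that(1) ne that(3)] .
    ultimately have "qd = i" by linarith
    then show ?thesis using qd by simp
  qed
  define c' where "c' = (if r (i+1) = Some (\<sigma> i) then 1 - c else c)"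
  define r1 where "r1 = (if c = 1 \<and> \<not> leo le (r i) (r (i+1)) then swap_pos r i (i+1) else r)"
  define \<sigma>' where "\<sigma>' = AT le \<sigma> i c'"
  have key: "p \<le> q" if "p\<in>{1..n}" "q\<in>{1..n}" "\<sigma>' p = a" "r1 q = Some a" for p q a
  proof -
    let ?ss = "c' = 1 \<and> \<not> le (\<sigma> i) (\<sigma> (i+1))"
    let ?sw = "c = 1 \<and> \<not> leo le (r i) (r (i+1))"
    have sp: "\<sigma>' x = (if ?ss then (if x = i then \<sigma> (i+1) else if x = i+1 then \<sigma> i else \<sigma> x) else \<sigma> x)" for x
      unfolding \<sigma>'_def AT_def swap_pos_def by auto
    have rp: "r1 x = (if ?sw then (if x = i then r (i+1) else if x = i+1 then r i else r x) else r x)" for x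
      unfolding r1_def swap_pos_def by auto
    have ii: "\<sigma> i \<noteq> \<sigma> (i+1)"
    proof
      assume "\<sigma> i = \<sigma> (i+1)"
      then have "i = i+1" using inj_onD[OF inj _ i1(1) i1(2)] by blast
      then show False by simp
    qed
    have ri: "r i = Some x \<Longrightarrow> r (i+1) \<noteq> Some x" for x
    proof
      assume "r i = Some x" "r (i+1) = Some x"
      then have "i = i+1" using runiq[OF i1] by blast
      then show False by simp
    qed
    define p0 where "p0 = (if ?ss \<and> p = i then i+1 else if ?ss \<and> p = i+1 then i else p)"
    define q0 where "q0 = (if ?sw \<and> q = i then i+1 else if ?sw \<and> q = i+1 then i else q)"
    have p0: "p0 \<in> {1..n}" "\<sigma> p0 = a" using that(1,3) i1 sp[of p] unfolding p0_def by (auto split: if_splits)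
    have q0: "q0 \<in> {1..n}" "r q0 = Some a" using that(2,4) i1 rp[of q] unfolding q0_def by (auto split: if_splits)
    have pq0: "p0 \<le> q0" using bnd[OF p0(1) q0(1) p0(2) q0(2)] .
    have c01: "c = 0 \<or> c = 1" using assms(9) by auto
    show ?thesis
    proof (cases "?ss \<and> p = i+1")
      case ssp: True
      hence pa: "\<sigma> i = a" "p0 = i" using p0 unfolding p0_def by auto
      consider "q0 = i" | "q0 = i+1" | "q0 \<ge> i+2" using pq0 pa by linarith
      then show ?thesis
      proof cases
        case 1
        hence ria: "r i = Some (\<sigma> i)" using q0 pa by simp
        hence "c' = c" using ri unfolding c'_def by auto
        hence c1: "c = 1" using ssp by simp
        show ?thesis
        proof (cases ?sw)
          case True then show ?thesis using 1 ssp unfolding q0_def by (auto split: if_splits)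
        next
          case False
          then have "leo le (r i) (r (i+1))" using c1 by simp
          then obtain b where "r (i+1) = Some b" "le (\<sigma> i) b" using ria
            by (cases "r (i+1)") auto
          then have "le (\<sigma> i) (\<sigma> (i+1))" using claimA ria by blast
          then show ?thesis using ssp by simp
        qed
      next
        case 2
        hence "r (i+1) = Some (\<sigma> i)" using q0 pa by simp
        hence "c' = 1 - c" unfolding c'_def by simp
        hence "c = 0" using ssp c01 by auto
        hence "q = q0" unfolding q0_def by auto
        then show ?thesis using 2 ssp by simp
      next
        case 3
        hence "q = q0" unfolding q0_def by (auto split: if_splits)
        then show ?thesis using 3 ssp by simp
      qed
    next
      case nssp: False
      hence pp0: "p \<le> p0" unfolding p0_def by auto
      show ?thesis
      proof (cases "?sw \<and> q = i")
        case False
        hence "q0 \<le> q" unfolding q0_def by auto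
        then show ?thesis using pp0 pq0 by simp
      next
        case swq: True
        hence qa: "r (i+1) = Some a" "q0 = i+1" using q0 unfolding q0_def by auto
        consider "p0 < i" | "p0 = i" | "p0 = i+1" using pq0 qa by linarith
        then show ?thesis
        proof cases
          case 1
          hence "p = p0" unfolding p0_def by (auto split: if_splits)
          then show ?thesis using 1 swq by simp
        next
          case 2
          hence "\<sigma> i = a" using p0 by simp
          hence "c' = 1 - c" using qa unfolding c'_def by simp
          hence "\<not> ?ss" using swq by simp
          hence "p = p0" unfolding p0_def by simp
          then show ?thesis using 2 swq by simp
        next
          case 3
          hence sa: "\<sigma> (i+1) = a" using p0 by simp
          hence "\<sigma> i \<noteq> a" using ii by auto
          hence "c' = c" using qa unfolding c'_def by auto
          show ?thesis
          proof (cases ?ss)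
            case True
            then have "p = i" using 3 unfolding p0_def by (auto split: if_splits)
            then show ?thesis using swq by simp
          next
            case False
            then have "le (\<sigma> i) a" using \<open>c' = c\<close> swq sa by auto
            then have "r i = Some (\<sigma> i)" using claimB qa sa by blast
            then have "leo le (r i) (r (i+1))" using qa \<open>le (\<sigma> i) a\<close> by simp
            then show ?thesis using swq by simp
          qed
        qed
      qed
    qed
  qed
  have bc: "BC n le (r, k) i c = (if r1 n = None then (r1(n := Some (k+1)), k+1) else (r1, k))"
    unfolding BC_def r1_def Let_def fst_conv snd_conv by (rule refl)
  have tgt: "AT le \<sigma> i (if r (i+1) = Some (\<sigma> i) then 1 - c else c) = \<sigma>'"
    unfolding \<sigma>'_def c'_def by (rule refl)
  show ?thesis
  proof (cases "r1 n = None")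
    case True
    have "\<forall>a\<in>{1..k+1}. \<forall>p\<in>{1..n}. \<forall>q\<in>{1..n}.
       \<sigma>' p = a \<and> (r1(n := Some (k+1))) q = Some a \<longrightarrow> p \<le> q"
    proof (intro ballI impI)
      fix a p q assume h: "a \<in> {1..k+1}" "p\<in>{1..n}" "q\<in>{1..n}"
        "\<sigma>' p = a \<and> (r1(n := Some (k+1))) q = Some a"
      show "p \<le> q"
      proof (cases "q = n")
        case True then show ?thesis using h(2) by simp
      next
        case False
        then have "r1 q = Some a" using h(4) by simp
        then show ?thesis using key[OF h(2) h(3)] h(4) by blast
      qed
    qed
    then have "bounds n (r1(n := Some (k+1)), k+1) \<sigma>'" unfolding bounds_def fst_conv snd_conv .
    then show ?thesis unfolding bc tgt if_P[OF True] .
  next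
    case False
    have "\<forall>a\<in>{1..k}. \<forall>p\<in>{1..n}. \<forall>q\<in>{1..n}.
       \<sigma>' p = a \<and> r1 q = Some a \<longrightarrow> p \<le> q"
      using key by blast
    then have "bounds n (r1, k) \<sigma>'" unfolding bounds_def fst_conv snd_conv .
    then show ?thesis unfolding bc tgt if_not_P[OF False] .
  qed
qed

end
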